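(* Let $G=(V,E)$ be a graph and $\mathfrak d_{|S_v}(V)=\bigcup_{v\in V}\mathfrak d_{|S_v}$. Then $\mathfrak d_{|S_v}(V)^*=\delta(G)^*$.
   Context: All graphs are finite, simple and undirected. For $G=(V,E)$ and $v\in V$, $E_v$ is the set of edges incident to $v$. For two distinct adjacent edges $e=(v,u)$, $f=(v,w)$, a square spanned by $e$ and $f$ is a $4$-cycle $v,u,x,w,v$ with $x\notin\{v,u,w\}$; it is chordless if neither $(u,w)$ nor $(v,x)$ is an edge. In a chordless square $v,u,x,w$, $(x,w)$ is opposite to $(v,u)$ and $(x,u)$ is opposite to $(v,w)$ (and vice versa). The relation $\delta(G)$ on $E$: $(e,f)\in\delta(G)$ iff (i) $e,f$ are distinct adjacent edges and it is not the case that $e$ and $f$ span exactly one square and that square is chordless; or (ii) $e,f$ are opposite edges of a chordless square; or (iii) $e=f$. For a relation $R$ on $E$, $R^*$ is its transitive closure, the finest equivalence relation on $E$ containing $R$. Define $\mathfrak d_v=((E_v\times E)\cup(E\times E_v))\cap\delta(G)$ and $\mathfrak d_v^*$ the finest equivalence relation on $E$ containing $\mathfrak d_v$. Let $F_v\subseteq E\setminus E_v$ be the set of edges that are the edges not incident to $v$ of some chordless square spanned by two edges $e,e'\in E_v$ with $(e,e')\notin\mathfrak d_v^*$. The partial star product $S_v$ is the subgraph of $G$ with edge set $E_v\cup F_v$ and vertex set the endpoints of these edges. $\mathfrak d_{|S_v}=\{(e,f)\in\mathfrak d_v^*: e,f\in E(S_v)\}$. *)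

theory Defs
  imports Main
begin

definition simple_graph :: "'a set \<Rightarrow> 'a set set \<Rightarrow> bool" where
  "simple_graph V E \<longleftrightarrow> finite V \<and>
     (\<forall>e\<in>E. \<exists>u v. e = {u, v} \<and> u \<noteq> v \<and> u \<in> V \<and> v \<in> V)"

definition incident_edges :: "'a set set \<Rightarrow> 'a \<Rightarrow> 'a set set" where
  "incident_edges E v = {e \<in> E. v \<in> e}"

definition equiv_closure :: "'b set \<Rightarrow> ('b \<times> 'b) set \<Rightarrow> ('b \<times> 'b) set" where
  "equiv_closure A R = \<Inter>{S. equiv A S \<and> R \<subseteq> S}"

definition adjacent_edges :: "'a set \<Rightarrow> 'a set \<Rightarrow> bool" where
  "adjacent_edges e f \<longleftrightarrow> e \<noteq> f \<and> e \<inter> f \<noteq> {}"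

definition squares :: "'a set set \<Rightarrow> 'a set \<Rightarrow> 'a set \<Rightarrow> ('a \<times> 'a \<times> 'a \<times> 'a) set" where
  "squares E e f = {(v, u, x, w). e = {v, u} \<and> f = {v, w} \<and> distinct [v, u, x, w] \<and>
      e \<in> E \<and> f \<in> E \<and> {u, x} \<in> E \<and> {x, w} \<in> E}"

definition chordless :: "'a set set \<Rightarrow> ('a \<times> 'a \<times> 'a \<times> 'a) \<Rightarrow> bool" where
  "chordless E sq = (case sq of (v, u, x, w) \<Rightarrow> {u, w} \<notin> E \<and> {v, x} \<notin> E)"

text \<open>e and f are opposite edges of a chordless square a,b,c,d (opposite pairs ab/cd, bc/da;
  the second pair is covered by rotating the quantified cycle).\<close>
definition opposite_edges :: "'a set set \<Rightarrow> 'a set \<Rightarrow> 'a set \<Rightarrow> bool" where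
  "opposite_edges E e f \<longleftrightarrow> (\<exists>a b c d. distinct [a, b, c, d] \<and>
      {a, b} \<in> E \<and> {b, c} \<in> E \<and> {c, d} \<in> E \<and> {d, a} \<in> E \<and>
      {a, c} \<notin> E \<and> {b, d} \<notin> E \<and> e = {a, b} \<and> f = {c, d})"

definition delta :: "'a set set \<Rightarrow> ('a set \<times> 'a set) set" where
  "delta E = {(e, f). e \<in> E \<and> f \<in> E \<and>
     ((adjacent_edges e f \<and>
        \<not> (card (squares E e f) = 1 \<and> (\<forall>sq \<in> squares E e f. chordless E sq)))
      \<or> opposite_edges E e f \<or> e = f)}"

definition dv :: "'a set set \<Rightarrow> 'a \<Rightarrow> ('a set \<times> 'a set) set" where
  "dv E v = ((incident_edges E v \<times> E) \<union> (E \<times> incident_edges E v)) \<inter> delta E"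

definition dv_star :: "'a set set \<Rightarrow> 'a \<Rightarrow> ('a set \<times> 'a set) set" where
  "dv_star E v = equiv_closure E (dv E v)"

definition Fv :: "'a set set \<Rightarrow> 'a \<Rightarrow> 'a set set" where
  "Fv E v = {g \<in> E - incident_edges E v. \<exists>u x w.
      (v, u, x, w) \<in> squares E {v, u} {v, w} \<and> chordless E (v, u, x, w) \<and>
      ({v, u}, {v, w}) \<notin> dv_star E v \<and> (g = {u, x} \<or> g = {x, w})}"

definition star_edges :: "'a set set \<Rightarrow> 'a \<Rightarrow> 'a set set" where
  "star_edges E v = incident_edges E v \<union> Fv E v"

definition d_restr :: "'a set set \<Rightarrow> 'a \<Rightarrow> ('a set \<times> 'a set) set" where
  "d_restr E v = {(e, f) \<in> dv_star E v. e \<in> star_edges E v \<and> f \<in> star_edges E v}"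

end

theory Submission
  imports Defs
begin

lemma ec_equiv:
  assumes "R \<subseteq> A \<times> A" shows "equiv A (equiv_closure A R)"
proof -
  have ne: "A \<times> A \<in> {S. equiv A S \<and> R \<subseteq> S}" using assms
    by (auto simp: equiv_def refl_on_def sym_def trans_def)
  show ?thesis unfolding equiv_closure_def
  proof (rule equivI)
    show "\<Inter>{S. equiv A S \<and> R \<subseteq> S} \<subseteq> A \<times> A" using ne by blast
    show "refl_on A (\<Inter>{S. equiv A S \<and> R \<subseteq> S})"
      unfolding refl_on_def equiv_def by blast
    show "sym (\<Inter>{S. equiv A S \<and> R \<subseteq> S})"
      unfolding sym_def equiv_def by blast
    show "trans (\<Inter>{S. equiv A S \<and> R \<subseteq> S})"
      unfolding trans_def equiv_def by blast
  qed
qed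

lemma ec_sub: "R \<subseteq> A \<times> A \<Longrightarrow> R \<subseteq> equiv_closure A R"
  unfolding equiv_closure_def by blast

lemma ec_min: "equiv A S \<Longrightarrow> R \<subseteq> S \<Longrightarrow> equiv_closure A R \<subseteq> S"
  unfolding equiv_closure_def by blast

lemma ec_AA: "R \<subseteq> A \<times> A \<Longrightarrow> equiv_closure A R \<subseteq> A \<times> A"
  using ec_equiv[of R A] by (auto simp: equiv_def refl_on_def)

lemma delta_sub: "delta E \<subseteq> E \<times> E" unfolding delta_def by auto

lemma dv_sub: "dv E v \<subseteq> delta E" unfolding dv_def by auto

lemma dvs_sub: "dv_star E v \<subseteq> E \<times> E"
  unfolding dv_star_def using ec_AA dv_sub delta_sub by (metis order_trans)

lemma dr_sub: "d_restr E v \<subseteq> dv_star E v" unfolding d_restr_def by auto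

lemma inc_star: "e \<in> E \<Longrightarrow> v \<in> e \<Longrightarrow> e \<in> star_edges E v"
  unfolding star_edges_def incident_edges_def by auto

lemma in_dr_inc:
  assumes "(e,f) \<in> dv_star E v" "v \<in> e" "v \<in> f" "e \<in> E" "f \<in> E"
  shows "(e,f) \<in> d_restr E v"
  using assms inc_star unfolding d_restr_def by auto

theorem theorem3p9:
  fixes V :: "'a set" and E :: "'a set set"
  assumes "simple_graph V E"
  shows "equiv_closure E (\<Union>v\<in>V. d_restr E v) = equiv_closure E (delta E)"
proof -
  define U where "U = (\<Union>v\<in>V. d_restr E v)"
  define L where "L = equiv_closure E U"
  have UE: "U \<subseteq> E \<times> E" unfolding U_def
  proof (rule UN_least)
    fix v show "d_restr E v \<subseteq> E \<times> E" using dr_sub dvs_sub by (rule order_trans)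
  qed
  have eqL: "equiv E L" unfolding L_def using ec_equiv[OF UE] .
  have UL: "U \<subseteq> L" unfolding L_def using ec_sub[OF UE] .
  have EV2: "\<And>e a. e \<in> E \<Longrightarrow> a \<in> e \<Longrightarrow> a \<in> V"
  proof -
    fix e a assume "e \<in> E" "a \<in> e"
    have "\<exists>u v. e = {u, v} \<and> u \<noteq> v \<and> u \<in> V \<and> v \<in> V"
      using assms \<open>e \<in> E\<close> unfolding simple_graph_def by simp
    then obtain u v where "e = {u,v}" "u \<in> V" "v \<in> V" by blast
    thus "a \<in> V" using \<open>a \<in> e\<close> by auto
  qed
  have EV: "\<And>a b. {a,b} \<in> E \<Longrightarrow> a \<in> V" using EV2 insertI1 by metis
  have dvstar: "(e,f) \<in> dv E v \<Longrightarrow> (e,f) \<in> dv_star E v" for e f v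
  proof -
    have "dv E v \<subseteq> E \<times> E" using dv_sub delta_sub by (rule order_trans)
    thus "(e,f) \<in> dv E v \<Longrightarrow> (e,f) \<in> dv_star E v" unfolding dv_star_def using ec_sub by blast
  qed
  have symL: "\<And>x y. (x,y) \<in> L \<Longrightarrow> (y,x) \<in> L" using eqL unfolding equiv_def sym_def by blast
  have transL: "\<And>x y z. (x,y) \<in> L \<Longrightarrow> (y,z) \<in> L \<Longrightarrow> (x,z) \<in> L"
    using eqL unfolding equiv_def trans_def by blast
  have inU: "\<And>v p. v \<in> V \<Longrightarrow> p \<in> d_restr E v \<Longrightarrow> p \<in> L" using UL unfolding U_def by blast
  have deltaL: "delta E \<subseteq> L"
  proof
    fix p assume p: "p \<in> delta E"
    obtain e f where pef: "p = (e,f)" by (cases p)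
    have pd0: "(e,f) \<in> delta E" using p pef by simp
    have all: "e \<in> E \<and> f \<in> E \<and> ((adjacent_edges e f \<and>
        \<not> (card (squares E e f) = 1 \<and> (\<forall>sq \<in> squares E e f. chordless E sq)))
      \<or> opposite_edges E e f \<or> e = f)" using pd0 unfolding delta_def
      by (simp only: mem_Collect_eq prod.case)
    have eE: "e \<in> E" and fE: "f \<in> E" using all by (rule conjunct1, blast intro: conjunct1 conjunct2)
    have cases: "(adjacent_edges e f \<and>
        \<not> (card (squares E e f) = 1 \<and> (\<forall>sq \<in> squares E e f. chordless E sq)))
      \<or> opposite_edges E e f \<or> e = f" using all by (elim conjE)
    show "p \<in> L"
    proof -
      { assume "e = f"
        moreover have "(e,e) \<in> L" using eqL eE unfolding equiv_def refl_on_def by blast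
        ultimately have ?thesis using pef by simp }
      moreover
      { assume adj: "adjacent_edges e f"
        have "e \<inter> f \<noteq> {}" using adj unfolding adjacent_edges_def by (elim conjE)
        then obtain v where hv: "v \<in> e" "v \<in> f" by blast
        have "e \<in> incident_edges E v" using hv eE by (simp add: incident_edges_def)
        hence "(e,f) \<in> dv E v" using pd0 fE unfolding dv_def by simp
        hence "(e,f) \<in> d_restr E v" by (rule in_dr_inc[OF dvstar hv eE fE])
        hence "(e,f) \<in> L" by (rule inU[OF EV2[OF eE hv(1)]])
        hence ?thesis using pef by simp }
      moreover
      { assume "opposite_edges E e f"
        then obtain a b c d where sq: "distinct [a, b, c, d]"
          "{a, b} \<in> E" "{b, c} \<in> E" "{c, d} \<in> E" "{d, a} \<in> E"
          "{a, c} \<notin> E" "{b, d} \<notin> E" "e = {a, b}" "f = {c, d}"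
          unfolding opposite_edges_def by blast
        have aV: "a \<in> V" and dV: "d \<in> V" using EV sq by blast+
        have da: "{d,a} = {a,d}" by auto
        have dc: "{c,d} = {d,c}" by auto
        have pd: "(e,f) \<in> delta E" using p pef by simp
        have pd': "(f,e) \<in> delta E"
        proof -
          have dd: "distinct [c,d,a,b]" using sq(1) by auto
          have n1: "{c,a} \<notin> E" using sq(6) by (simp add: insert_commute)
          have n2: "{d,b} \<notin> E" using sq(7) by (simp add: insert_commute)
          have "opposite_edges E f e" unfolding opposite_edges_def
            apply (rule exI[of _ c], rule exI[of _ d], rule exI[of _ a], rule exI[of _ b])
            using dd n1 n2 sq(2,3,4,5,8,9) by simp
          thus ?thesis using eE fE unfolding delta_def by auto
        qed
        have ad: "{a,d} \<in> E" using sq(5) da by simp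
        have cb: "{c,b} = {b,c}" by auto
        have ca: "{c,a} = {a,c}" by auto
        have sqa: "(a, b, c, d) \<in> squares E {a, b} {a, d}"
          unfolding squares_def using sq(1,2,3,4) ad by (simp add: dc)
        have cha: "chordless E (a,b,c,d)" unfolding chordless_def using sq(6,7) by simp
        have sqd: "(d, a, b, c) \<in> squares E {d, a} {d, c}"
          unfolding squares_def using sq(1,2,3,4,5) by (simp add: dc[symmetric]; blast)
        have chd: "chordless E (d,a,b,c)" unfolding chordless_def using sq(6,7) ca
          by (simp add: insert_commute)
        have ?thesis
        proof (cases "({a,b},{a,d}) \<in> dv_star E a")
          case False
          have naf: "a \<notin> f" using sq(1,9) by auto
          have "f \<in> Fv E a" unfolding Fv_def incident_edges_def
            apply (rule CollectI, rule conjI)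
            using sq(4,9) naf apply simp
            apply (rule exI[of _ b], rule exI[of _ c], rule exI[of _ d])
            using sqa cha False sq(9) by simp
          hence fS: "f \<in> star_edges E a" unfolding star_edges_def by blast
          have "(e,f) \<in> dv E a" using pd sq unfolding dv_def incident_edges_def by auto
          hence "(e,f) \<in> dv_star E a" by (rule dvstar)
          moreover have "e \<in> star_edges E a" using inc_star[OF eE] sq(8) by simp
          ultimately have "(e,f) \<in> d_restr E a" using fS unfolding d_restr_def by simp
          thus ?thesis using inU aV pef by blast
        next
          case True
          hence "(e,{a,d}) \<in> dv_star E a" using sq(8) by simp
          hence "(e,{a,d}) \<in> d_restr E a"
            by (rule in_dr_inc) (simp add: sq(8), simp, rule eE, rule ad)
          hence s1: "(e,{a,d}) \<in> L" using inU aV by blast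
          show ?thesis
          proof (cases "({d,a},{d,c}) \<in> dv_star E d")
            case False
            have nde: "d \<notin> e" using sq(1,8) by auto
            have "e \<in> Fv E d" unfolding Fv_def incident_edges_def
              apply (rule CollectI, rule conjI)
              using sq(2,8) nde apply simp
              apply (rule exI[of _ a], rule exI[of _ b], rule exI[of _ c])
              using sqd chd False sq(8) by simp
            hence eS: "e \<in> star_edges E d" unfolding star_edges_def by blast
            have "(f,e) \<in> dv E d" using pd' sq unfolding dv_def incident_edges_def by auto
            hence "(f,e) \<in> dv_star E d" by (rule dvstar)
            moreover have "f \<in> star_edges E d" using inc_star[OF fE] sq(9) by simp
            ultimately have "(f,e) \<in> d_restr E d" using eS unfolding d_restr_def by simp
            hence "(f,e) \<in> L" using inU dV by blast
            thus ?thesis using symL pef by blast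
          next
            case True
            hence "({a,d},f) \<in> dv_star E d" using sq(9) da dc by simp
            hence "({a,d},f) \<in> d_restr E d"
              by (rule in_dr_inc) (simp, simp add: sq(9), rule ad, rule fE)
            hence "({a,d},f) \<in> L" using inU dV by blast
            thus ?thesis using transL s1 pef by blast
          qed
        qed }
      ultimately show ?thesis using cases by (elim disjE conjE) auto
    qed
  qed
  have "L \<subseteq> equiv_closure E (delta E)"
  proof -
    have eqD: "equiv E (equiv_closure E (delta E))" using ec_equiv[OF delta_sub] .
    have "U \<subseteq> equiv_closure E (delta E)"
    proof
      fix p assume "p \<in> U"
      then obtain v where "p \<in> d_restr E v" unfolding U_def by blast
      hence "p \<in> dv_star E v" by (rule subsetD[OF dr_sub])
      moreover have "dv_star E v \<subseteq> equiv_closure E (delta E)"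
        unfolding dv_star_def
        by (rule ec_min[OF eqD order_trans[OF dv_sub ec_sub[OF delta_sub]]])
      ultimately show "p \<in> equiv_closure E (delta E)" by blast
    qed
    thus ?thesis unfolding L_def by (rule ec_min[OF eqD])
  qed
  moreover have "equiv_closure E (delta E) \<subseteq> L" using ec_min[OF eqL deltaL] .
  ultimately show ?thesis unfolding L_def U_def by blast
qed

end
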